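(* Let $\mathbf{C}=\mathbf{C}_1\,\dot\cup\,\mathbf{C}_2$ (disjoint union), and let $\mathbf{B}\in\dot{\mathbb{P}}(\mathbb{L}(\mathbf{C}_1))$ with $|\mathbf{B}|=|\mathbf{C}_1|$. Then $\mathbf{B}$ is irreducible for $\mathcal{D}(\mathbf{C},\Omega)$ if and only if there exist $\omega^*\in\Omega$ and values $\mathbf{c}_2^*$ for $\mathbf{C}_2$ such that (i) $D_{\mathbf{B}=\mathbf{1},\mathbf{C}_2=\mathbf{c}_2^*}(\omega^* )=1$, and (ii) for every $L\in\mathbf{B}$, $D_{\mathbf{B}\setminus\{L\}=\mathbf{1},L=0,\mathbf{C}_2=\mathbf{c}_2^*}(\omega^* )=0$.
   Context: An event is a binary random variable on a population $\Omega$ of individuals $\omega$; $\overline{X}=1-X$. For a finite set $\mathbf{C}$ of events (causes), $\mathbb{L}(\mathbf{C})=\mathbf{C}\cup\{\overline{X}:X\in\mathbf{C}\}$, and $\dot{\mathbb{P}}(\mathbb{L}(\mathbf{C}))$ is the set of subsets of $\mathbb{L}(\mathbf{C})$ not containing both $X$ and $\overline{X}$ for any $X$. $(L)_{\mathbf{c}}$ is the value of literal $L$ under assignment $\mathbf{c}$, and $\bigwedge(\mathbf{B})=\min_{L\in\mathbf{B}}L$. The potential outcomes $\mathcal{D}(\mathbf{C},\Omega)$ are values $D_{\mathbf{c}}(\omega)\in\{0,1\}$ for every $\omega\in\Omega$ and every assignment $\mathbf{c}$ to $\mathbf{C}$. If $\mathbf{B}\in\dot{\mathbb{P}}(\mathbb{L}(\mathbf{C}_1))$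 has $|\mathbf{B}|=|\mathbf{C}_1|$ (exactly one literal per variable of $\mathbf{C}_1$), an assignment of values to the literals of $\mathbf{B}$ determines an assignment to $\mathbf{C}_1$; thus e.g. $D_{\mathbf{B}=\mathbf{1},\mathbf{C}_2=\mathbf{c}_2}(\omega)$ denotes the potential outcome when all literals in $\mathbf{B}$ are set to 1 and $\mathbf{C}_2$ to $\mathbf{c}_2$, and $D_{\mathbf{B}\setminus\{L\}=\mathbf{1},L=0,\mathbf{C}_2=\mathbf{c}_2}(\omega)$ the one where $L$ is set to 0 and the other literals of $\mathbf{B}$ to 1. A sufficient cause representation $(\mathbf{A},\mathfrak{B})$ for $\mathcal{D}(\mathbf{C},\Omega)$ is a tuple $\mathbf{A}=\langle A_1,\dots,A_p\rangle$ of binary random variables on $\Omega$ unaffected by interventions on $\mathbf{C}$ and a tuple $\mathfrak{B}=\langle\mathbf{B}_1,\dots,\mathbf{B}_p\rangle$, $\mathbf{B}_i\in\dot{\mathbb{P}}(\mathbb{L}(\mathbf{C}))$, such that for all $\omega,\mathbf{c}$: $D_{\mathbf{c}}(\omega)=1$ iff some $j$ has $A_j(\omega)=1$ and $(\bigwedge(\mathbf{B}_j))_{\mathbf{c}}=1$. A set $\mathbf{B}\in\dot{\mathbb{P}}(\mathbb{L}(\mathbf{C}))$ is irreducible for $\mathcal{D}(\mathbf{C},\Omega)$ if in every sufficient cause representation $(\mathbf{A},\mathfrak{B})$ for $\mathcal{D}(\mathbf{C},\Omega)$ there is some $\mathbf{B}_i\in\mathfrak{B}$ with $\mathbf{B}\subseteq\mathbf{B}_i$.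 *)

theory Defs
  imports Main
begin

text \<open>A literal is a pair (X, b): (X, True) stands for
  the event X and (X, False) for its complement. An assignment to a set C of causes is
  a function 'v => bool that is False outside C (extensional representation).\<close>

type_synonym 'v lit = "'v \<times> bool"

definition assignments :: "'v set \<Rightarrow> ('v \<Rightarrow> bool) set" where
  "assignments C = {c. \<forall>v. v \<notin> C \<longrightarrow> c v = False}"

definition lit_val :: "('v \<Rightarrow> bool) \<Rightarrow> 'v lit \<Rightarrow> bool" where
  "lit_val c L = (c (fst L) = snd L)"

definition conj_val :: "('v \<Rightarrow> bool) \<Rightarrow> 'v lit set \<Rightarrow> bool" where
  "conj_val c B = (\<forall>L\<in>B. lit_val c L)"

definition literals :: "'v set \<Rightarrow> 'v lit set" where
  "literals C = C \<times> UNIV"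

definition consistent_lits :: "'v set \<Rightarrow> 'v lit set set" where
  "consistent_lits C = {B. B \<subseteq> literals C \<and> (\<forall>X. \<not> ((X, True) \<in> B \<and> (X, False) \<in> B))}"

text \<open>D w c is the potential outcome D_c(w). The A_j are functions of the
  individual only, hence unaffected by interventions on C.\<close>
definition suff_cause_rep ::
  "'v set \<Rightarrow> 'w set \<Rightarrow> ('w \<Rightarrow> ('v \<Rightarrow> bool) \<Rightarrow> bool)
     \<Rightarrow> ('w \<Rightarrow> bool) list \<Rightarrow> 'v lit set list \<Rightarrow> bool" where
  "suff_cause_rep C \<Omega> D A BB \<longleftrightarrow>
     length A = length BB \<and> (\<forall>i<length BB. BB ! i \<in> consistent_lits C) \<and>
     (\<forall>\<omega>\<in>\<Omega>. \<forall>c\<in>assignments C.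
        D \<omega> c \<longleftrightarrow> (\<exists>j<length A. (A ! j) \<omega> \<and> conj_val c (BB ! j)))"

definition irreducible ::
  "'v set \<Rightarrow> 'w set \<Rightarrow> ('w \<Rightarrow> ('v \<Rightarrow> bool) \<Rightarrow> bool) \<Rightarrow> 'v lit set \<Rightarrow> bool" where
  "irreducible C \<Omega> D B \<longleftrightarrow>
     (\<forall>A BB. suff_cause_rep C \<Omega> D A BB \<longrightarrow> (\<exists>i<length BB. B \<subseteq> BB ! i))"

definition set_lits :: "'v lit set \<Rightarrow> ('v \<Rightarrow> bool) \<Rightarrow> ('v \<Rightarrow> bool)" where
  "set_lits B c2 = (\<lambda>v. if \<exists>b. (v, b) \<in> B then (THE b. (v, b) \<in> B) else c2 v)"

end

theory Submission
  imports Defs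
begin

lemma asg_finite: "finite C \<Longrightarrow> finite (assignments C)"
proof -
  assume f: "finite C"
  have "assignments C \<subseteq> (\<lambda>A v. v \<in> A) ` Pow C"
  proof
    fix c assume "c \<in> assignments C"
    then have "c = (\<lambda>v. v \<in> {v. c v})" "{v. c v} \<subseteq> C" by (auto simp: assignments_def)
    then show "c \<in> (\<lambda>A v. v \<in> A) ` Pow C" by blast
  qed
  then show ?thesis using f finite_subset by blast
qed

lemma key1:
  assumes "c \<in> assignments C" "c' \<in> assignments C" "conj_val c ((\<lambda>v. (v, c' v)) ` C)"
  shows "c = c'"
proof
  fix v show "c v = c' v"
    using assms by (cases "v \<in> C") (auto simp: assignments_def conj_val_def lit_val_def)
qed

lemma key2:
  assumes "c \<in> assignments C" "c' \<in> assignments C" "conj_val c ((\<lambda>v. (v, c' v)) ` C - {(u,b)})"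
  shows "c = c' \<or> c = c'(u := \<not> c' u)"
proof -
  have "\<forall>v. v \<noteq> u \<longrightarrow> c v = c' v"
  proof (intro allI impI)
    fix v assume "v \<noteq> u"
    show "c v = c' v"
    proof (cases "v \<in> C")
      case True
      then have "(v, c' v) \<in> (\<lambda>v. (v, c' v)) ` C - {(u,b)}" using \<open>v \<noteq> u\<close> by auto
      then have "lit_val c (v, c' v)" using assms(3) unfolding conj_val_def by blast
      then show ?thesis by (simp add: lit_val_def)
    next
      case False
      then show ?thesis using assms(1,2) by (auto simp: assignments_def)
    qed
  qed
  then show ?thesis by (cases "c u = c' u") (auto simp: fun_eq_iff)
qed

theorem mainTheorem2:
  fixes C1 C2 :: "'v set" and \<Omega> :: "'w set"
    and D :: "'w \<Rightarrow> ('v \<Rightarrow> bool) \<Rightarrow> bool" and B :: "'v lit set"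
  assumes "finite C1" and "finite C2" and "C1 \<inter> C2 = {}"
    and "B \<in> consistent_lits C1" and "card B = card C1"
  shows "irreducible (C1 \<union> C2) \<Omega> D B \<longleftrightarrow>
    (\<exists>\<omega>\<in>\<Omega>. \<exists>c2\<in>assignments C2.
       D \<omega> (set_lits B c2) \<and>
       (\<forall>L\<in>B. \<not> D \<omega> ((set_lits B c2)(fst L := \<not> snd L))))"
proof -
  note fin1 = assms(1) and fin2 = assms(2) and disj = assms(3)
  have Bsub: "B \<subseteq> C1 \<times> UNIV" and cons: "\<And>X. \<not> ((X, True) \<in> B \<and> (X, False) \<in> B)"
    using assms(4) by (auto simp: consistent_lits_def literals_def)
  have uniq: "\<And>v b b'. (v,b) \<in> B \<Longrightarrow> (v,b') \<in> B \<Longrightarrow> b = b'"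
    using cons by (metis (full_types))
  have finB: "finite B" using Bsub fin1 by (meson finite_SigmaI finite_UNIV finite_subset)
  have injB: "inj_on fst B" unfolding inj_on_def
  proof (intro ballI impI)
    fix x y assume "x \<in> B" "y \<in> B" "fst x = fst y"
    then show "x = y" using uniq[of "fst x" "snd x" "snd y"] by (cases x, cases y) auto
  qed
  have fB: "fst ` B = C1"
  proof (rule card_subset_eq[OF fin1])
    show "fst ` B \<subseteq> C1" using Bsub by auto
    show "card (fst ` B) = card C1" using card_image[OF injB] assms(5) by simp
  qed
  have sl1: "\<And>v b c2. (v,b) \<in> B \<Longrightarrow> set_lits B c2 v = b"
  proof -
    fix v b c2 assume vb: "(v,b) \<in> B"
    have "(THE b. (v, b) \<in> B) = b" using vb uniq by (intro the_equality) auto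
    then show "set_lits B c2 v = b" unfolding set_lits_def using vb by auto
  qed
  have sl2: "\<And>v c2. v \<notin> C1 \<Longrightarrow> set_lits B c2 v = c2 v"
    unfolding set_lits_def using fB by force
  show ?thesis
  proof
    assume irr: "irreducible (C1 \<union> C2) \<Omega> D B"
    show "\<exists>\<omega>\<in>\<Omega>. \<exists>c2\<in>assignments C2.
       D \<omega> (set_lits B c2) \<and>
       (\<forall>L\<in>B. \<not> D \<omega> ((set_lits B c2)(fst L := \<not> snd L)))"
    proof (rule ccontr)
      assume "\<not> ?thesis"
      then have H: "\<And>\<omega> c2. \<omega> \<in> \<Omega> \<Longrightarrow> c2 \<in> assignments C2 \<Longrightarrow> D \<omega> (set_lits B c2) \<Longrightarrow>
          (\<exists>L\<in>B. D \<omega> ((set_lits B c2)(fst L := \<not> snd L)))" by blast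
      let ?C = "C1 \<union> C2"
      define lits where "lits = (\<lambda>c::'v\<Rightarrow>bool. (\<lambda>v. (v, c v)) ` ?C)"
      obtain xs where xs: "set xs = assignments ?C"
        using asg_finite[of ?C] fin1 fin2 finite_list by blast
      obtain ys where ys: "set ys = B" using finB finite_list by blast
      define items where "items =
        [(\<lambda>\<omega>. D \<omega> c, lits c). c \<leftarrow> xs, \<not> conj_val c B] @
        [(\<lambda>\<omega>. D \<omega> c \<and> D \<omega> (c(fst L := \<not> c (fst L))), lits c - {L}). c \<leftarrow> xs, L \<leftarrow> ys]"
      have setit: "it \<in> set items \<longleftrightarrow>
          (\<exists>c\<in>assignments ?C. \<not> conj_val c B \<and> it = (\<lambda>\<omega>. D \<omega> c, lits c)) \<or>
          (\<exists>c\<in>assignments ?C. \<exists>L\<in>B. it = (\<lambda>\<omega>. D \<omega> c \<and> D \<omega> (c(fst L := \<not> c (fst L))), lits c - {L}))"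
        for it unfolding items_def using xs ys by auto
      have ex_conv: "(\<exists>j<length (map fst items). (map fst items ! j) \<omega> \<and> conj_val c (map snd items ! j))
          \<longleftrightarrow> (\<exists>it\<in>set items. fst it \<omega> \<and> conj_val c (snd it))" for \<omega> c
      proof
        assume "\<exists>j<length (map fst items). (map fst items ! j) \<omega> \<and> conj_val c (map snd items ! j)"
        then obtain j where "j < length items" "fst (items ! j) \<omega>" "conj_val c (snd (items ! j))" by auto
        then show "\<exists>it\<in>set items. fst it \<omega> \<and> conj_val c (snd it)" by (meson nth_mem)
      next
        assume "\<exists>it\<in>set items. fst it \<omega> \<and> conj_val c (snd it)"
        then obtain it where "it \<in> set items" "fst it \<omega>" "conj_val c (snd it)" by blast
        then obtain j where "j < length items" "items ! j = it" by (meson in_set_conv_nth)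
        then show "\<exists>j<length (map fst items). (map fst items ! j) \<omega> \<and> conj_val c (map snd items ! j)"
          using \<open>fst it \<omega>\<close> \<open>conj_val c (snd it)\<close> by auto
      qed
      have consl: "lits c - X \<in> consistent_lits ?C" for c X
        by (auto simp: lits_def consistent_lits_def literals_def)
      have rep: "suff_cause_rep ?C \<Omega> D (map fst items) (map snd items)"
        unfolding suff_cause_rep_def
      proof (intro conjI ballI allI impI)
        show "length (map fst items) = length (map snd items)" by simp
      next
        fix i assume "i < length (map snd items)"
        then have "items ! i \<in> set items" by simp
        then show "map snd items ! i \<in> consistent_lits ?C"
          using \<open>i < _\<close> consl[of _ "{}"] consl by (auto simp: setit)
      next
        fix \<omega> c assume w: "\<omega> \<in> \<Omega>" and c: "c \<in> assignments ?C"
        have selfc: "conj_val c (lits c - X)" for X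
          by (auto simp: lits_def conj_val_def lit_val_def)
        show "D \<omega> c \<longleftrightarrow> (\<exists>j<length (map fst items). (map fst items ! j) \<omega> \<and> conj_val c (map snd items ! j))"
          unfolding ex_conv
        proof
          assume Dc: "D \<omega> c"
          show "\<exists>it\<in>set items. fst it \<omega> \<and> conj_val c (snd it)"
          proof (cases "conj_val c B")
            case False
            then have "(\<lambda>\<omega>. D \<omega> c, lits c) \<in> set items" using c unfolding setit by blast
            then show ?thesis using Dc selfc[of "{}"] by force
          next
            case True
            define c2 where "c2 = (\<lambda>v. v \<in> C2 \<and> c v)"
            have c2a: "c2 \<in> assignments C2" by (auto simp: c2_def assignments_def)
            have eq: "set_lits B c2 = c"
            proof
              fix v show "set_lits B c2 v = c v"
              proof (cases "v \<in> C1")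
                case True
                then obtain b where vb: "(v,b) \<in> B" using fB by force
                then have "c v = b" using \<open>conj_val c B\<close> by (auto simp: conj_val_def lit_val_def)
                then show ?thesis using sl1[OF vb] by simp
              next
                case False
                then show ?thesis using sl2[OF False] c by (auto simp: c2_def assignments_def)
              qed
            qed
            obtain L where L: "L \<in> B" "D \<omega> (c(fst L := \<not> snd L))"
              using H[OF w c2a] Dc eq by auto
            have "c (fst L) = snd L" using L(1) True by (auto simp: conj_val_def lit_val_def)
            then have "D \<omega> (c(fst L := \<not> c (fst L)))" using L(2) by simp
            moreover have "(\<lambda>\<omega>. D \<omega> c \<and> D \<omega> (c(fst L := \<not> c (fst L))), lits c - {L}) \<in> set items"
              using c L(1) unfolding setit by blast
            ultimately show ?thesis using Dc selfc[of "{L}"] by force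
          qed
        next
          assume "\<exists>it\<in>set items. fst it \<omega> \<and> conj_val c (snd it)"
          then obtain it where it: "it \<in> set items" "fst it \<omega>" "conj_val c (snd it)" by blast
          from it(1)[unfolded setit] show "D \<omega> c"
          proof (elim disjE bexE conjE)
            fix c' assume c': "c' \<in> assignments ?C" "it = (\<lambda>\<omega>. D \<omega> c', lits c')"
            then have "c = c'" using key1[OF c c'(1)] it(3) by (simp add: lits_def)
            then show ?thesis using it(2) c' by simp
          next
            fix c' L assume c': "c' \<in> assignments ?C" "L \<in> B"
              "it = (\<lambda>\<omega>. D \<omega> c' \<and> D \<omega> (c'(fst L := \<not> c' (fst L))), lits c' - {L})"
            have "conj_val c ((\<lambda>v. (v, c' v)) ` ?C - {(fst L, snd L)})"
              using it(3) c' by (simp add: lits_def)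
            then have "c = c' \<or> c = c'(fst L := \<not> c' (fst L))" using key2[OF c c'(1)] by blast
            then show ?thesis using it(2) c' by auto
          qed
        qed
      qed
      obtain i where i: "i < length (map snd items)" "B \<subseteq> map snd items ! i"
        using irr rep unfolding irreducible_def by blast
      then have "items ! i \<in> set items" "B \<subseteq> snd (items ! i)" by auto
      then show False
      proof (unfold setit, elim disjE bexE conjE)
        fix c assume "\<not> conj_val c B" "items ! i = (\<lambda>\<omega>. D \<omega> c, lits c)" "B \<subseteq> snd (items ! i)"
        then show False by (auto simp: lits_def conj_val_def lit_val_def)
      next
        fix c L assume "L \<in> B" "items ! i = (\<lambda>\<omega>. D \<omega> c \<and> D \<omega> (c(fst L := \<not> c (fst L))), lits c - {L})"
          "B \<subseteq> snd (items ! i)"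
        then show False by auto
      qed
    qed
  next
    assume "\<exists>\<omega>\<in>\<Omega>. \<exists>c2\<in>assignments C2.
       D \<omega> (set_lits B c2) \<and>
       (\<forall>L\<in>B. \<not> D \<omega> ((set_lits B c2)(fst L := \<not> snd L)))"
    then obtain \<omega> c2 where w: "\<omega> \<in> \<Omega>" and c2: "c2 \<in> assignments C2"
      and D1: "D \<omega> (set_lits B c2)"
      and D0: "\<And>L. L \<in> B \<Longrightarrow> \<not> D \<omega> ((set_lits B c2)(fst L := \<not> snd L))" by blast
    let ?c = "set_lits B c2"
    have ca: "?c \<in> assignments (C1 \<union> C2)"
      using c2 sl2 by (auto simp: assignments_def)
    have cfa: "?c(v := b) \<in> assignments (C1 \<union> C2)" if "v \<in> C1" for v b
      using ca that by (auto simp: assignments_def)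
    show "irreducible (C1 \<union> C2) \<Omega> D B"
      unfolding irreducible_def
    proof (intro allI impI)
      fix A BB assume rep: "suff_cause_rep (C1 \<union> C2) \<Omega> D A BB"
      then obtain j where j: "j < length A" "(A ! j) \<omega>" "conj_val ?c (BB ! j)"
        using w ca D1 unfolding suff_cause_rep_def by blast
      have jl: "j < length BB" using j rep by (simp add: suff_cause_rep_def)
      have consj: "BB ! j \<in> consistent_lits (C1 \<union> C2)" using jl rep by (simp add: suff_cause_rep_def)
      have "B \<subseteq> BB ! j"
      proof
        fix L assume LB: "L \<in> B"
        show "L \<in> BB ! j"
        proof (rule ccontr)
          assume nL: "L \<notin> BB ! j"
          obtain v b where Lvb: "L = (v,b)" by force
          have vC1: "v \<in> C1" using LB Lvb Bsub by auto
          have cv: "?c v = b" using sl1 LB Lvb by simp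
          have "conj_val (?c(v := \<not> b)) (BB ! j)"
            unfolding conj_val_def
          proof
            fix M assume M: "M \<in> BB ! j"
            obtain u d where Mud: "M = (u,d)" by force
            have "lit_val ?c M" using j(3) M by (simp add: conj_val_def)
            then have "?c u = d" by (simp add: Mud lit_val_def)
            show "lit_val (?c(v := \<not> b)) M"
            proof (cases "u = v")
              case True
              then have "d = b" using \<open>?c u = d\<close> cv by simp
              then have "M = L" using True Mud Lvb by simp
              then show ?thesis using M nL by simp
            next
              case False
              then show ?thesis using \<open>?c u = d\<close> Mud by (simp add: lit_val_def)
            qed
          qed
          then have "D \<omega> (?c(v := \<not> b))"
            using rep w cfa[OF vC1] j(1,2) unfolding suff_cause_rep_def by blast
          then show False using D0[OF LB] Lvb by simp
        qed
      qed
      then show "\<exists>i<length BB. B \<subseteq> BB ! i" using jl by blast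
    qed
  qed
qed

end
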